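(* For every $E\subseteq\mathbb{F}_q^2$, $$\sum_{t\in\mathbb{F}_q^6}\nu_B(t)^2\le \Psi(2,2).$$
   Context: Standing assumptions: $q=p^n$ with $p$ a prime, $p\equiv 3\pmod 4$, $n$ odd. For $x,y\in\mathbb{F}_q^2$, $\|x-y\|=(x_1-y_1)^2+(x_2-y_2)^2$. $O(\mathbb{F}_q^2)$ is the group of $2\times2$ matrices $\theta$ over $\mathbb{F}_q$ with $\theta^T\theta=I$. $\lambda_\theta(w)=|\{(u,v)\in E^2: u-\theta v=w\}|$. For $t\in\mathbb{F}_q^6$, $\nu_B(t)$ is the number of $(x,y,z,u,v)\in E^5$ with $(\|x-y\|,\|x-z\|,\|y-z\|,\|x-u\|,\|x-v\|,\|u-v\|)=t$. For positive integers $a,b$, $$\Psi(a,b)=\sum_{x,x'\in\mathbb{F}_q^2}\ \sum_{\theta,\phi\in O(\mathbb{F}_q^2)}\lambda_\theta(x-\theta x')^a\,\lambda_\phi(x-\phi x')^b.$$ *)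

theory Defs
  imports "HOL-Analysis.Analysis"
begin

definition sqdist :: "'a::field ^ 2 \<Rightarrow> 'a ^ 2 \<Rightarrow> 'a" where
  "sqdist x y = (x$1 - y$1)^2 + (x$2 - y$2)^2"

definition orth_group :: "('a::field ^ 2 ^ 2) set" where
  "orth_group = {\<theta>. transpose \<theta> ** \<theta> = mat 1}"

definition lam :: "('a::field ^ 2) set \<Rightarrow> 'a ^ 2 ^ 2 \<Rightarrow> 'a ^ 2 \<Rightarrow> nat" where
  "lam E \<theta> w = card {(u, v). u \<in> E \<and> v \<in> E \<and> u - \<theta> *v v = w}"

definition nuB :: "('a::field ^ 2) set \<Rightarrow> 'a ^ 6 \<Rightarrow> nat" where
  "nuB E t = card {(x, y, z, u, v). x \<in> E \<and> y \<in> E \<and> z \<in> E \<and> u \<in> E \<and> v \<in> E \<and>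
      sqdist x y = t$1 \<and> sqdist x z = t$2 \<and> sqdist y z = t$3 \<and>
      sqdist x u = t$4 \<and> sqdist x v = t$5 \<and> sqdist u v = t$6}"

definition Psi :: "('a::{finite,field} ^ 2) set \<Rightarrow> nat \<Rightarrow> nat \<Rightarrow> nat" where
  "Psi E a b = (\<Sum>x\<in>UNIV. \<Sum>x'\<in>UNIV. \<Sum>\<theta>\<in>orth_group. \<Sum>\<phi>\<in>orth_group.
      lam E \<theta> (x - \<theta> *v x') ^ a * lam E \<phi> (x - \<phi> *v x') ^ b)"

end

theory Submission imports Defs begin
lemma of_nat_card_zero: "of_nat CARD('a::{finite,comm_ring_1}) = (0::'a)"
proof -
  have "(\<Sum>x\<in>UNIV. x + 1) = (\<Sum>x\<in>(UNIV::'a set). x)"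
    by (rule sum.reindex_bij_witness[where i="\<lambda>x. x - 1" and j="\<lambda>x. x + 1"]) auto
  then show ?thesis by (simp add: sum.distrib)
qed

lemma fermat_field:
  fixes x :: "'a::{finite,field}"
  assumes "x \<noteq> 0" shows "x ^ (CARD('a) - 1) = 1"
proof -
  let ?U = "UNIV - {0::'a}"
  have "(\<Prod>y\<in>?U. x * y) = (\<Prod>y\<in>?U. y)"
    by (rule prod.reindex_bij_witness[where i="\<lambda>y. y / x" and j="\<lambda>y. x * y"]) (use assms in auto)
  then have "x ^ card ?U * (\<Prod>y\<in>?U. y) = (\<Prod>y\<in>?U. y)"
    by (simp add: prod.distrib)
  moreover have "(\<Prod>y\<in>?U. y) \<noteq> 0" by simp
  ultimately have "x ^ card ?U = 1" by simp
  moreover have "card ?U = CARD('a) - 1" by (simp add: card_Diff_singleton)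
  ultimately show ?thesis by simp
qed


lemma divN: "(N::'a::field) \<noteq> 0 \<Longrightarrow> N * x = y \<Longrightarrow> x = y / N"
  by (simp add: field_simps)
lemma sqdiv: "(N::'a::field) \<noteq> 0 \<Longrightarrow> P^2 + R^2 = N^2 \<Longrightarrow> (P/N)^2 + (R/N)^2 = 1"
  by (simp add: power_divide add_divide_distrib[symmetric])

lemma ident: fixes pa pb qa qb :: "'a::comm_ring_1" shows "(pa*qa+pb*qb)^2 + (pa*qb-pb*qa)^2 = (pa^2+pb^2)*(qa^2+qb^2)"
    by (simp add: power2_eq_square algebra_simps)
lemma ident2: fixes pa pb qa qb :: "'a::comm_ring_1" shows "(pa*qa-pb*qb)^2 + (pa*qb+pb*qa)^2 = (pa^2+pb^2)*(qa^2+qb^2)"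
    by (simp add: power2_eq_square algebra_simps)

lemma lin1: "(N::'a::field) \<noteq> 0 \<Longrightarrow> P*z - R*w = N*b \<Longrightarrow> P/N*z - R/N*w = b"
  by (metis (no_types, lifting) diff_divide_distrib nonzero_mult_div_cancel_left times_divide_eq_left)
lemma lin2: "(N::'a::field) \<noteq> 0 \<Longrightarrow> P*z + R*w = N*b \<Longrightarrow> P/N*z + R/N*w = b"
  by (metis (no_types, lifting) add_divide_distrib nonzero_mult_div_cancel_left times_divide_eq_left)

context
  assumes two: "(2::'a::field) \<noteq> 0"
  and an: "\<And>x y::'a. x^2 + y^2 = 0 \<Longrightarrow> x = 0"
begin

lemma an2: "(x::'a)^2 + y^2 = 0 \<Longrightarrow> y = 0"
  using an[of y x] by (simp add: add.commute)

lemma sq_eq: "(x::'a)^2 = y^2 \<Longrightarrow> x = y \<or> x = - y"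
  by (metis power2_eq_iff)

lemma scalar_cong:
  fixes a1 a2 b1 b2 c1 c2 d1 d2 :: 'a
  assumes qa: "a1^2 + a2^2 = c1^2 + c2^2"
    and qb: "b1^2 + b2^2 = d1^2 + d2^2"
    and qab: "(a1-b1)^2 + (a2-b2)^2 = (c1-d1)^2 + (c2-d2)^2"
  shows "\<exists>m11 m12 m21 m22. m11^2 + m21^2 = 1 \<and> m12^2 + m22^2 = 1 \<and> m11*m12 + m21*m22 = 0
     \<and> m11*c1 + m12*c2 = a1 \<and> m21*c1 + m22*c2 = a2
     \<and> m11*d1 + m12*d2 = b1 \<and> m21*d1 + m22*d2 = b2"
proof -
  have dot: "a1*b1 + a2*b2 = c1*d1 + c2*d2"
  proof -
    have e: "2*(a1*b1 + a2*b2) - 2*(c1*d1 + c2*d2) = ((c1-d1)^2+(c2-d2)^2 - ((a1-b1)^2+(a2-b2)^2)) + (a1^2+a2^2 - (c1^2+c2^2)) + (b1^2+b2^2 - (d1^2+d2^2))"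
      by (simp add: power2_eq_square algebra_simps)
    have "2*(a1*b1 + a2*b2) = 2*(c1*d1 + c2*d2)"
      using e qa qb qab by simp
    then show ?thesis using two by (metis mult_left_cancel)
  qed
  show ?thesis
  proof (cases "c1^2 + c2^2 = 0")
    case True
    then have c: "c1 = 0" "c2 = 0" using an[OF True] an2[OF True] by auto
    then have a0: "a1^2 + a2^2 = 0" using qa True by simp
    then have a: "a1 = 0" "a2 = 0" using an[OF a0] an2[OF a0] by auto
    show ?thesis
    proof (cases "d1^2 + d2^2 = 0")
      case True
      then have "d1 = 0" "d2 = 0" using an[OF True] an2[OF True] by auto
      moreover have b0: "b1^2 + b2^2 = 0" using qb True by simp
      moreover have "b1 = 0" "b2 = 0" using an[OF b0] an2[OF b0] by auto
      ultimately show ?thesis using a c by (intro exI[of _ 1] exI[of _ 0]) simp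
    next
      case False
      define N where "N = d1^2 + d2^2"
      define cs where "cs = (b1*d1 + b2*d2)/N"
      define sn where "sn = (d1*b2 - d2*b1)/N"
      have N: "N \<noteq> 0" using False N_def by simp
      have "(b1*d1 + b2*d2)^2 + (d1*b2 - d2*b1)^2 = (b1*d1 + b2*d2)^2 + (b1*d2 - b2*d1)^2"
        by (simp add: power2_eq_square algebra_simps)
      also have "\<dots> = N^2" using ident[of b1 d1 b2 d2] unfolding qb N_def by (simp add: power2_eq_square)
      finally have "cs^2 + sn^2 = 1"
        unfolding cs_def sn_def using N by (intro sqdiv)
      moreover have "cs*d1 - sn*d2 = b1"
        unfolding cs_def sn_def using N
        by (rule lin1) (simp add: N_def power2_eq_square algebra_simps)
      moreover have "sn*d1 + cs*d2 = b2"
        unfolding cs_def sn_def using N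
        by (rule lin2) (simp add: N_def power2_eq_square algebra_simps)
      ultimately show ?thesis using a c
        by (intro exI[of _ cs] exI[of _ "-sn"] exI[of _ sn]) (simp add: algebra_simps)
    qed
  next
    case False
    define N where "N = c1^2 + c2^2"
    have N: "N \<noteq> 0" using False N_def by simp
    define k where "k = a1*b2 - a2*b1"
    define k' where "k' = c1*d2 - c2*d1"
    have e1: "(c1*d1+c2*d2)^2 + k^2 = (c1^2+c2^2)*(d1^2+d2^2)"
      using ident[of a1 b1 a2 b2] dot qa qb unfolding k_def by simp
    have e2: "(c1*d1+c2*d2)^2 + k'^2 = (c1^2+c2^2)*(d1^2+d2^2)"
      using ident[of c1 d1 c2 d2] unfolding k'_def by simp
    have "k^2 = k'^2" by (rule add_left_imp_eq[OF trans[OF e1 e2[symmetric]]])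
    then have kk: "k = k' \<or> k = -k'" by (rule sq_eq)
    have Nb1: "N*b1 = a1*(c1*d1+c2*d2) - a2*k"
    proof -
      have "(a1^2+a2^2)*b1 = a1*(a1*b1+a2*b2) - a2*k" unfolding k_def by (simp add: power2_eq_square algebra_simps)
      then show ?thesis using qa dot unfolding N_def by simp
    qed
    have Nb2: "N*b2 = a2*(c1*d1+c2*d2) + a1*k"
    proof -
      have "(a1^2+a2^2)*b2 = a2*(a1*b1+a2*b2) + a1*k" unfolding k_def by (simp add: power2_eq_square algebra_simps)
      then show ?thesis using qa dot unfolding N_def by simp
    qed
    from kk show ?thesis
    proof
      assume kk: "k = k'"
      define cs where "cs = (a1*c1 + a2*c2)/N"
      define sn where "sn = (c1*a2 - c2*a1)/N"
      have "(a1*c1 + a2*c2)^2 + (c1*a2 - c2*a1)^2 = (a1*c1 + a2*c2)^2 + (a1*c2 - a2*c1)^2"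
        by (simp add: power2_eq_square algebra_simps)
      also have "\<dots> = N^2" using ident[of a1 c1 a2 c2] unfolding qa N_def by (simp add: power2_eq_square)
      finally have "cs^2 + sn^2 = 1"
        unfolding cs_def sn_def using N by (intro sqdiv)
      moreover have "cs*c1 - sn*c2 = a1"
        unfolding cs_def sn_def using N
        by (rule lin1) (simp add: N_def power2_eq_square algebra_simps)
      moreover have "sn*c1 + cs*c2 = a2"
        unfolding cs_def sn_def using N
        by (rule lin2) (simp add: N_def power2_eq_square algebra_simps)
      moreover have "cs*d1 - sn*d2 = b1"
      proof -
        have "(a1*c1 + a2*c2)*d1 - (c1*a2 - c2*a1)*d2 = a1*(c1*d1+c2*d2) - a2*k'"
          unfolding k'_def by (simp add: algebra_simps)
        then show ?thesis unfolding cs_def sn_def using N Nb1 kk by (intro lin1) simp_all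
      qed
      moreover have "sn*d1 + cs*d2 = b2"
      proof -
        have "(c1*a2 - c2*a1)*d1 + (a1*c1 + a2*c2)*d2 = a2*(c1*d1+c2*d2) + a1*k'"
          unfolding k'_def by (simp add: algebra_simps)
        then show ?thesis unfolding cs_def sn_def using N Nb2 kk by (intro lin2) simp_all
      qed
      ultimately show ?thesis
        by (intro exI[of _ cs] exI[of _ "-sn"] exI[of _ sn]) (simp add: algebra_simps)
    next
      assume kk: "k = -k'"
      define C where "C = (a1*c1 - a2*c2)/N"
      define S where "S = (a1*c2 + a2*c1)/N"
      have "(a1*c1 - a2*c2)^2 + (a1*c2 + a2*c1)^2 = N^2"
        using ident2[of a1 c1 a2 c2] unfolding qa N_def by (simp add: power2_eq_square)
      then have "C^2 + S^2 = 1"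
        unfolding C_def S_def using N by (intro sqdiv)
      moreover have "C*c1 + S*c2 = a1"
        unfolding C_def S_def using N
        by (rule lin2) (simp add: N_def power2_eq_square algebra_simps)
      moreover have "S*c1 - C*c2 = a2"
        unfolding C_def S_def using N
        by (rule lin1) (simp add: N_def power2_eq_square algebra_simps)
      moreover have "C*d1 + S*d2 = b1"
      proof -
        have "(a1*c1 - a2*c2)*d1 + (a1*c2 + a2*c1)*d2 = a1*(c1*d1+c2*d2) + a2*k'"
          unfolding k'_def by (simp add: algebra_simps)
        then show ?thesis unfolding C_def S_def using N Nb1 kk by (intro lin2) simp_all
      qed
      moreover have "S*d1 - C*d2 = b2"
      proof -
        have "(a1*c2 + a2*c1)*d1 - (a1*c1 - a2*c2)*d2 = a2*(c1*d1+c2*d2) - a1*k'"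
          unfolding k'_def by (simp add: algebra_simps)
        then show ?thesis unfolding C_def S_def using N Nb2 kk by (intro lin1) simp_all
      qed
      ultimately show ?thesis
        by (intro exI[of _ C] exI[of _ S] exI[of _ S] exI[of _ "-C"]) (simp add: algebra_simps)
    qed
  qed
qed

lemma vec_cong:
  fixes x y z x' y' z' :: "'a^2"
  assumes "sqdist x y = sqdist x' y'" "sqdist x z = sqdist x' z'" "sqdist y z = sqdist y' z'"
  shows "\<exists>\<theta>\<in>orth_group. \<theta> *v (y' - x') = y - x \<and> \<theta> *v (z' - x') = z - x"
proof -
  have pc: "\<And>a b::'a. (a - b)^2 = (b - a)^2" by (simp add: power2_commute)
  have qa: "(y$1-x$1)^2 + (y$2-x$2)^2 = (y'$1-x'$1)^2 + (y'$2-x'$2)^2"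
    using assms(1) unfolding sqdist_def by (simp add: pc)
  have qb: "(z$1-x$1)^2 + (z$2-x$2)^2 = (z'$1-x'$1)^2 + (z'$2-x'$2)^2"
    using assms(2) unfolding sqdist_def by (simp add: pc)
  have qab: "((y$1-x$1)-(z$1-x$1))^2 + ((y$2-x$2)-(z$2-x$2))^2 = ((y'$1-x'$1)-(z'$1-x'$1))^2 + ((y'$2-x'$2)-(z'$2-x'$2))^2"
    using assms(3) unfolding sqdist_def by simp
  obtain m11 m12 m21 m22 where m: "m11^2 + m21^2 = 1" "m12^2 + m22^2 = 1" "m11*m12 + m21*m22 = 0"
     "m11*(y'$1-x'$1) + m12*(y'$2-x'$2) = y$1-x$1" "m21*(y'$1-x'$1) + m22*(y'$2-x'$2) = y$2-x$2"
     "m11*(z'$1-x'$1) + m12*(z'$2-x'$2) = z$1-x$1" "m21*(z'$1-x'$1) + m22*(z'$2-x'$2) = z$2-x$2"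
    using scalar_cong[OF qa qb qab] by blast
  define M :: "'a^2^2" where "M = (\<chi> i j. if i = 1 then (if j = 1 then m11 else m12) else (if j = 1 then m21 else m22))"
  have M: "M$1$1 = m11" "M$1$2 = m12" "M$2$1 = m21" "M$2$2 = m22" unfolding M_def by simp_all
  have "transpose M ** M = mat 1"
    unfolding vec_eq_iff forall_2 matrix_matrix_mult_def transpose_def mat_def
    using m(1-3) by (simp add: sum_2 M power2_eq_square algebra_simps)
  then have "M \<in> orth_group" unfolding orth_group_def by simp
  moreover have "M *v (y' - x') = y - x" "M *v (z' - x') = z - x"
    unfolding vec_eq_iff forall_2 matrix_vector_mult_def using m(4-7) by (simp_all add: sum_2 M)
  ultimately show ?thesis by blast
qed

end

lemma field_facts:
  fixes p n :: nat
  assumes "prime p" and "p mod 4 = 3" and "odd n" and "CARD('a::{finite,field}) = p ^ n"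
  shows "(2::'a) \<noteq> 0" and "\<And>x y::'a. x^2 + y^2 = 0 \<Longrightarrow> x = 0"
proof -
  define q where "q = p ^ n"
  obtain m where n: "n = 2*m+1" using assms(3) oddE by blast
  have "q mod 4 = (p mod 4)^n mod 4" unfolding q_def by (simp add: power_mod)
  also have "\<dots> = (3 * 9^m) mod 4" using assms(2) unfolding n by (simp add: power_mult)
  also have "\<dots> = (3 * (9^m mod 4)) mod 4" by (simp add: mod_mult_right_eq)
  also have "9^m mod 4 = (1::nat)"
  proof -
    have "(9::nat)^m mod 4 = (9 mod 4)^m mod 4" by (rule power_mod[symmetric])
    then show ?thesis by simp
  qed
  finally have q4: "q mod 4 = 3" by simp
  have c0: "of_nat q = (0::'a)" using of_nat_card_zero[where 'a='a] assms(4) unfolding q_def by simp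
  have q2: "q = 2 * (q div 2) + 1" using q4 by presburger
  show two: "(2::'a) \<noteq> 0"
  proof
    assume "(2::'a) = 0"
    then have "of_nat q = (1::'a)" by (subst q2) simp
    with c0 show False by simp
  qed
  fix x y :: 'a assume xy: "x^2 + y^2 = 0"
  show "x = 0"
  proof (rule ccontr)
    assume x0: "x \<noteq> 0"
    have y0: "y \<noteq> 0" using xy x0 by auto
    define r where "r = x / y"
    have r2: "r^2 = -1" using xy y0 unfolding r_def
      by (simp add: power_divide field_simps eq_neg_iff_add_eq_0)
    have r0: "r \<noteq> 0" using x0 y0 unfolding r_def by simp
    have "r ^ (CARD('a) - 1) = 1" by (rule fermat_field[OF r0])
    moreover have "CARD('a) - 1 = 2 * ((q - 1) div 2)" using q4 assms(4) unfolding q_def by presburger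
    moreover have "odd ((q - 1) div 2)" using q4 by presburger
    ultimately have "(r^2) ^ ((q - 1) div 2) = 1" and od: "odd ((q - 1) div 2)"
      by (simp_all add: power_mult)
    then have m1: "(-1::'a) = 1" unfolding r2 by simp
    have "(2::'a) = 1 - (-1)" by simp
    also have "\<dots> = 0" unfolding m1 by simp
    finally have "(2::'a) = 0" .
    with two show False by simp
  qed
qed


lemma exhaust_6:
  fixes x :: 6
  shows "x = 1 \<or> x = 2 \<or> x = 3 \<or> x = 4 \<or> x = 5 \<or> x = 6"
proof (induct x)
  case (of_int z)
  then have "z = 0 \<or> z = 1 \<or> z = 2 \<or> z = 3 \<or> z = 4 \<or> z = 5" by fastforce
  then show ?case by auto
qed

lemma vec6_eq: "(t::'b^6) $ 1 = s $ 1 \<Longrightarrow> t $ 2 = s $ 2 \<Longrightarrow> t $ 3 = s $ 3 \<Longrightarrow>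
  t $ 4 = s $ 4 \<Longrightarrow> t $ 5 = s $ 5 \<Longrightarrow> t $ 6 = s $ 6 \<Longrightarrow> t = s"
  unfolding vec_eq_iff
proof
  fix i :: 6
  assume h: "t $ 1 = s $ 1" "t $ 2 = s $ 2" "t $ 3 = s $ 3" "t $ 4 = s $ 4" "t $ 5 = s $ 5" "t $ 6 = s $ 6"
  from exhaust_6[of i] show "t $ i = s $ i" using h by (elim disjE) simp_all
qed

lemma count_main:
  fixes E :: "('a::{finite,field}^2) set"
  assumes cong: "\<And>x y z x' y' z' :: 'a^2. sqdist x y = sqdist x' y' \<Longrightarrow> sqdist x z = sqdist x' z' \<Longrightarrow>
      sqdist y z = sqdist y' z' \<Longrightarrow> \<exists>\<theta>\<in>orth_group. \<theta> *v (y' - x') = y - x \<and> \<theta> *v (z' - x') = z - x"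
  shows "(\<Sum>t\<in>(UNIV :: ('a ^ 6) set). (nuB E t)^2) \<le> Psi E 2 2"
proof -
  define A where "A t = {(x, y, z, u, v). x \<in> E \<and> y \<in> E \<and> z \<in> E \<and> u \<in> E \<and> v \<in> E \<and>
      sqdist x y = t$1 \<and> sqdist x z = t$2 \<and> sqdist y z = t$3 \<and>
      sqdist x u = t$4 \<and> sqdist x v = t$5 \<and> sqdist u v = t$6}" for t :: "'a^6"
  define S where "S = {((x, y, z, u, v), (x', y', z', u', v')).
      x \<in> E \<and> y \<in> E \<and> z \<in> E \<and> u \<in> E \<and> v \<in> E \<and>
      x' \<in> E \<and> y' \<in> E \<and> z' \<in> E \<and> u' \<in> E \<and> v' \<in> E \<and>
      sqdist x y = sqdist x' y' \<and> sqdist x z = sqdist x' z' \<and> sqdist y z = sqdist y' z' \<and>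
      sqdist x u = sqdist x' u' \<and> sqdist x v = sqdist x' v' \<and> sqdist u v = sqdist u' v'}"
  have finS: "finite S" by simp
  have "(\<Sum>t\<in>(UNIV :: ('a ^ 6) set). (nuB E t)^2) = (\<Sum>t\<in>UNIV. card (A t \<times> A t))"
    by (simp add: nuB_def A_def card_cartesian_product power2_eq_square)
  also have "\<dots> = card (\<Union>t\<in>UNIV. A t \<times> A t)"
  proof (rule card_UN_disjoint[symmetric])
    show "\<forall>i\<in>UNIV. \<forall>j\<in>UNIV. i \<noteq> j \<longrightarrow> A i \<times> A i \<inter> A j \<times> A j = {}"
    proof (intro ballI impI)
      fix i j :: "'a^6" assume ij: "i \<noteq> j"
      show "A i \<times> A i \<inter> A j \<times> A j = {}"
      proof (rule ccontr)
        assume "A i \<times> A i \<inter> A j \<times> A j \<noteq> {}"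
        then obtain P where "P \<in> A i" "P \<in> A j" by blast
        then have "i = j" unfolding A_def by (intro vec6_eq) auto
        with ij show False by simp
      qed
    qed
  qed simp_all
  also have "\<dots> \<le> card S"
    by (rule card_mono[OF finS]) (auto simp: A_def S_def)
  finally have L: "(\<Sum>t\<in>(UNIV :: ('a ^ 6) set). (nuB E t)^2) \<le> card S" .
  define th where "th x y z x' y' z' = (SOME \<theta>. \<theta> \<in> orth_group \<and> \<theta> *v (y' - x') = y - x \<and> \<theta> *v (z' - x') = z - x)"
    for x y z x' y' z' :: "'a^2"
  have th: "th x y z x' y' z' \<in> orth_group \<and> th x y z x' y' z' *v (y' - x') = y - x \<and> th x y z x' y' z' *v (z' - x') = z - x"
    if "sqdist x y = sqdist x' y'" "sqdist x z = sqdist x' z'" "sqdist y z = sqdist y' z'" for x y z x' y' z'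
  proof -
    from cong[OF that] have "\<exists>\<theta>. \<theta> \<in> orth_group \<and> \<theta> *v (y' - x') = y - x \<and> \<theta> *v (z' - x') = z - x" by blast
    then show ?thesis unfolding th_def by (rule someI_ex)
  qed
  define f where "f = (\<lambda>((x::'a^2,y::'a^2,z::'a^2,u::'a^2,v::'a^2),(x'::'a^2,y'::'a^2,z'::'a^2,u'::'a^2,v'::'a^2)).
     (x, x', th x y z x' y' z', th x u v x' u' v'))"
  define K where "K = (UNIV :: ('a^2) set) \<times> (UNIV :: ('a^2) set) \<times> (orth_group :: ('a^2^2) set) \<times> (orth_group :: ('a^2^2) set)"
  define F where "F k = {s \<in> S. f s = k}" for k
  have finK: "finite K" by simp
  have SK: "S = (\<Union>k\<in>K. F k)"
  proof
    show "S \<subseteq> (\<Union>k\<in>K. F k)"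
    proof
      fix s assume s: "s \<in> S"
      obtain s1 s2 where s12: "s = (s1, s2)" by (cases s)
      obtain x y z u v where s1: "s1 = (x,y,z,u,v)" by (metis prod_cases5)
      obtain x' y' z' u' v' where s2: "s2 = (x',y',z',u',v')" by (metis prod_cases5)
      have sdef: "s = ((x,y,z,u,v),(x',y',z',u',v'))" using s12 s1 s2 by simp
      have c: "sqdist x y = sqdist x' y'" "sqdist x z = sqdist x' z'" "sqdist y z = sqdist y' z'"
          "sqdist x u = sqdist x' u'" "sqdist x v = sqdist x' v'" "sqdist u v = sqdist u' v'"
        using s unfolding sdef S_def by simp_all
      have "f s \<in> K" unfolding sdef f_def K_def using th[OF c(1-3)] th[OF c(4-6)] by simp
      then show "s \<in> (\<Union>k\<in>K. F k)" using s unfolding F_def by blast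
    qed
  qed (auto simp: F_def)
  have "card S = (\<Sum>k\<in>K. card (F k))"
    unfolding SK by (rule card_UN_disjoint) (auto simp: F_def finS)
  also have "\<dots> \<le> (\<Sum>(x,x',\<theta>,\<phi>)\<in>K. lam E \<theta> (x - \<theta> *v x') ^ 2 * lam E \<phi> (x - \<phi> *v x') ^ 2)"
  proof (rule sum_mono)
    fix k assume "k \<in> K"
    obtain x0 x0' \<theta> \<phi> where kdef: "k = (x0, x0', \<theta>, \<phi>)" by (cases k) auto
    define Lt where "Lt \<psi> = {(u, v). u \<in> E \<and> v \<in> E \<and> u - \<psi> *v v = x0 - \<psi> *v x0'}" for \<psi> :: "'a^2^2"
    define g where "g = (\<lambda>((x::'a^2,y::'a^2,z::'a^2,u::'a^2,v::'a^2),(x'::'a^2,y'::'a^2,z'::'a^2,u'::'a^2,v'::'a^2)).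
       ((y,y'),(z,z'),(u,u'),(v,v')))"
    define h where "h = (\<lambda>((y::'a^2,y'::'a^2),(z::'a^2,z'::'a^2),(u::'a^2,u'::'a^2),(v::'a^2,v'::'a^2)).
       ((x0,y,z,u,v),(x0',y',z',u',v')))"
    have "inj_on g (F k)"
    proof (rule inj_on_inverseI)
      fix s assume s: "s \<in> F k"
      obtain s1 s2 where s12: "s = (s1, s2)" by (cases s)
      obtain x y z u v where s1: "s1 = (x,y,z,u,v)" by (metis prod_cases5)
      obtain x' y' z' u' v' where s2: "s2 = (x',y',z',u',v')" by (metis prod_cases5)
      have "f s = k" using s unfolding F_def by simp
      then have "x = x0" "x' = x0'" unfolding s12 s1 s2 f_def kdef by simp_all
      then show "h (g s) = s" unfolding s12 s1 s2 g_def h_def by simp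
    qed
    moreover have "g ` F k \<subseteq> Lt \<theta> \<times> Lt \<theta> \<times> Lt \<phi> \<times> Lt \<phi>"
    proof
      fix w assume "w \<in> g ` F k"
      then obtain s where sF: "s \<in> F k" and ws: "w = g s" by blast
      obtain s1 s2 where s12: "s = (s1, s2)" by (cases s)
      obtain x y z u v where s1: "s1 = (x,y,z,u,v)" by (metis prod_cases5)
      obtain x' y' z' u' v' where s2: "s2 = (x',y',z',u',v')" by (metis prod_cases5)
      have sdef: "s = ((x,y,z,u,v),(x',y',z',u',v'))" using s12 s1 s2 by simp
      have wdef: "w = ((y,y'),(z,z'),(u,u'),(v,v'))" using ws unfolding sdef g_def by simp
      have inS: "s \<in> S" and fk: "f s = k" using sF unfolding F_def by simp_all
      have E: "x \<in> E" "y \<in> E" "z \<in> E" "u \<in> E" "v \<in> E" "x' \<in> E" "y' \<in> E" "z' \<in> E" "u' \<in> E" "v' \<in> E"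
        using inS unfolding sdef S_def by simp_all
      have c: "sqdist x y = sqdist x' y'" "sqdist x z = sqdist x' z'" "sqdist y z = sqdist y' z'"
          "sqdist x u = sqdist x' u'" "sqdist x v = sqdist x' v'" "sqdist u v = sqdist u' v'"
        using inS unfolding sdef S_def by simp_all
      have eqs: "x0 = x" "x0' = x'" "\<theta> = th x y z x' y' z'" "\<phi> = th x u v x' u' v'"
        using fk unfolding sdef f_def kdef by auto
      have t1: "\<theta> *v (y' - x') = y - x" "\<theta> *v (z' - x') = z - x"
        using th[OF c(1-3)] eqs by auto
      have t2: "\<phi> *v (u' - x') = u - x" "\<phi> *v (v' - x') = v - x"
        using th[OF c(4-6)] eqs by auto
      have key: "\<And>(M::'a^2^2) a b a' b'. M *v (b' - a') = b - a \<Longrightarrow> b - M *v b' = a - M *v a'"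
        by (simp add: matrix_vector_mult_diff_distrib algebra_simps)
      show "w \<in> Lt \<theta> \<times> Lt \<theta> \<times> Lt \<phi> \<times> Lt \<phi>"
        unfolding wdef Lt_def using E key[OF t1(1)] key[OF t1(2)] key[OF t2(1)] key[OF t2(2)] eqs(1,2) by simp
    qed
    ultimately have "card (F k) \<le> card (Lt \<theta> \<times> Lt \<theta> \<times> Lt \<phi> \<times> Lt \<phi>)"
      by (intro card_inj_on_le) auto
    also have "\<dots> = lam E \<theta> (x0 - \<theta> *v x0') ^ 2 * lam E \<phi> (x0 - \<phi> *v x0') ^ 2"
      by (simp add: card_cartesian_product Lt_def lam_def power2_eq_square)
    finally show "card (F k) \<le> (case k of (x,x',\<theta>,\<phi>) \<Rightarrow> lam E \<theta> (x - \<theta> *v x') ^ 2 * lam E \<phi> (x - \<phi> *v x') ^ 2)"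
      unfolding kdef by simp
  qed
  also have "\<dots> = Psi E 2 2"
    unfolding Psi_def K_def by (simp add: sum.cartesian_product)
  finally show ?thesis using L by simp
qed

theorem lemma3p1:
  fixes E :: "('a::{finite,field} ^ 2) set"
    and p n :: nat
  assumes "prime p" and "p mod 4 = 3" and "odd n"
    and "CARD('a) = p ^ n"
  shows "(\<Sum>t\<in>(UNIV :: ('a ^ 6) set). (nuB E t)^2) \<le> Psi E 2 2"
proof (rule count_main)
  fix x y z x' y' z' :: "'a^2"
  assume h: "sqdist x y = sqdist x' y'" "sqdist x z = sqdist x' z'" "sqdist y z = sqdist y' z'"
  show "\<exists>\<theta>\<in>orth_group. \<theta> *v (y' - x') = y - x \<and> \<theta> *v (z' - x') = z - x"
    by (rule vec_cong[OF field_facts(1)[OF assms] field_facts(2)[OF assms] h])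
qed

end
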